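(* Let $H\in(1/2,1)$ and $c\in(0,2^{2H-2})$, and let $T^\circ$ be the $\mathbb{N}$-valued random variable with \[ P(T^\circ=1)=c\,L^\circ_H(\{1,2\})=c,\qquad P(T^\circ=k)=c\,D^\circ_H(\{1,k+1\},\{2,3,\dots,k\})\ \ (k\ge2). \] Then $E(T^\circ)=\infty$, and there is a slowly varying function $L_2$ (depending on the parameters) such that $P(T^\circ>t)=t^{1-2H}L_2(t)$.
   Context: For a finite set $A=\{i_0<\dots<i_k\}\subset\mathbb{N}\cup\{0\}$ with $|A|\ge1$ define $L^\circ_H(A)=\prod_{j=1}^{k}|i_j-i_{j-1}|^{2H-2}$ (equal to $1$ if $|A|=1$), and for disjoint finite $A\ne\emptyset$, $B$ define $D^\circ_H(A,B)=\sum_{B'\subseteq B}(-1)^{|B'|}c^{|B'|}L^\circ_H(A\cup B')$. Equivalently, $T^\circ$ has the law of $\min\{i\ge1:X^*_i=1\}$ for the GBP-II$^*$ process $(X^*_i)_{i\in\mathbb{N}}$, the $\{0,1\}$-valued process with $P(\bigcap_{i\in A}\{X^*_i=1\}\cap\bigcap_{i\in B}\{X^*_i=0\})=c^{|A|}D^\circ_H(A\cup\{0\},B)$ for disjoint finite $A,B\subset\mathbb{N}$; in that process successive gaps between 1's are i.i.d. copies of $T^\circ$. *)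

theory Defs
  imports "HOL-Probability.Probability"
begin

definition Lcirc :: "real \<Rightarrow> nat set \<Rightarrow> real" where
  "Lcirc H A = (let xs = sorted_list_of_set A in
     (\<Prod>j\<in>{1..<length xs}. real (xs ! j - xs ! (j - 1)) powr (2 * H - 2)))"

definition Dcirc :: "real \<Rightarrow> real \<Rightarrow> nat set \<Rightarrow> nat set \<Rightarrow> real" where
  "Dcirc H c A B = (\<Sum>B'\<in>Pow B. (-1) ^ card B' * c ^ card B' * Lcirc H (A \<union> B'))"

definition slowly_varying :: "(real \<Rightarrow> real) \<Rightarrow> bool" where
  "slowly_varying L \<longleftrightarrow>
     (\<forall>x>0. L x > 0) \<and> L \<in> borel_measurable borel \<and>
     (\<forall>lam>0. ((\<lambda>t. L (lam * t) / L t) \<longlongrightarrow> 1) at_top)"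

end

theory Submission
  imports Defs "HOL-Computational_Algebra.Formal_Power_Series"
begin


lemma Lcirc_single: "Lcirc H {a} = 1"
  by (simp add: Lcirc_def)

lemma Lcirc_insert_min:
  assumes "finite S" "S \<noteq> {}" "\<forall>x\<in>S. a < x"
  shows "Lcirc H (insert a S) = real (Min S - a) powr (2*H-2) * Lcirc H S"
proof -
  define xs where "xs = sorted_list_of_set S"
  have a_notin: "a \<notin> S" using assms by auto
  have Mi: "Min (insert a S) = a" using assms by (auto intro!: Min_eqI)
  have xs': "sorted_list_of_set (insert a S) = a # xs"
    using sorted_list_of_set_nonempty[of "insert a S"] assms Mi a_notin
    by (simp add: xs_def)
  have ne: "xs \<noteq> []" using assms by (simp add: xs_def)
  have hd: "xs ! 0 = Min S"
    using sorted_list_of_set_nonempty[of S] assms by (simp add: xs_def)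
  obtain n where n: "length xs = Suc n" using ne by (cases xs) auto
  have "Lcirc H (insert a S) = (\<Prod>j\<in>{1..<length (a#xs)}. real ((a#xs) ! j - (a#xs) ! (j - 1)) powr (2 * H - 2))"
    by (simp only: Lcirc_def Let_def xs')
  also have "length (a#xs) = Suc (Suc n)" using n by simp
  also have "{1..<Suc (Suc n)} = insert 1 (Suc ` {1..<Suc n})"
    by (auto simp: image_iff)
  also have "(\<Prod>j\<in>insert 1 (Suc ` {1..<Suc n}). real ((a#xs) ! j - (a#xs) ! (j - 1)) powr (2 * H - 2))
     = real (xs!0 - a) powr (2*H-2) * (\<Prod>j\<in>{1..<Suc n}. real (xs ! j - xs ! (j - 1)) powr (2 * H - 2))"
  proof -
    have "(\<Prod>j\<in>insert 1 (Suc ` {1..<Suc n}). real ((a#xs) ! j - (a#xs) ! (j - 1)) powr (2 * H - 2))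
      = real ((a#xs) ! 1 - (a#xs) ! 0) powr (2 * H - 2) * (\<Prod>j\<in>Suc ` {1..<Suc n}. real ((a#xs) ! j - (a#xs) ! (j - 1)) powr (2 * H - 2))"
      by (subst prod.insert) auto
    also have "(\<Prod>j\<in>Suc ` {1..<Suc n}. real ((a#xs) ! j - (a#xs) ! (j - 1)) powr (2 * H - 2))
       = (\<Prod>i\<in>{1..<Suc n}. real ((a#xs) ! Suc i - (a#xs) ! i) powr (2 * H - 2))"
      by (rule prod.reindex_cong[of Suc]) auto
    also have "\<dots> = (\<Prod>i\<in>{1..<Suc n}. real (xs ! i - xs ! (i - 1)) powr (2 * H - 2))"
      by (rule prod.cong) (auto simp: nth_Cons')
    finally show ?thesis by (metis One_nat_def nth_Cons_0 nth_Cons_Suc)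
  qed
  also have "(\<Prod>j\<in>{1..<Suc n}. real (xs ! j - xs ! (j - 1)) powr (2 * H - 2)) = Lcirc H S"
    by (simp only: Lcirc_def Let_def xs_def[symmetric] n)
  finally show ?thesis by (simp add: hd)
qed

lemma Lcirc_pair: "a < b \<Longrightarrow> Lcirc H {a,b} = real (b - a) powr (2*H-2)"
  using Lcirc_insert_min[of "{b}" a H] by (simp add: Lcirc_single)

lemma Dcirc_step:
  assumes "a < j" "j < b"
  shows "Dcirc H c {a,b} {j..<b} = Dcirc H c {a,b} {Suc j..<b} - c * real (j-a) powr (2*H-2) * Dcirc H c {j,b} {Suc j..<b}"
proof -
  have I: "{j..<b} = insert j {Suc j..<b}" using assms by auto
  have "Dcirc H c {a,b} {j..<b} = (\<Sum>B'\<in>Pow {Suc j..<b}. (-1) ^ card B' * c ^ card B' * Lcirc H ({a,b} \<union> B'))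
     + (\<Sum>B'\<in>insert j ` Pow {Suc j..<b}. (-1) ^ card B' * c ^ card B' * Lcirc H ({a,b} \<union> B'))"
    unfolding Dcirc_def I Pow_insert by (rule sum.union_disjoint) auto
  also have "(\<Sum>B'\<in>insert j ` Pow {Suc j..<b}. (-1) ^ card B' * c ^ card B' * Lcirc H ({a,b} \<union> B'))
    = (\<Sum>B'\<in>Pow {Suc j..<b}. (-1) ^ card (insert j B') * c ^ card (insert j B') * Lcirc H ({a,b} \<union> insert j B'))"
  proof (subst sum.reindex)
    show "inj_on (insert j) (Pow {Suc j..<b})"
    proof (rule inj_onI)
      fix x y assume "x \<in> Pow {Suc j..<b}" "y \<in> Pow {Suc j..<b}" "insert j x = insert j y"
      then show "x = y" by (metis Diff_insert_absorb PowD atLeastLessThan_iff not_less_eq_eq order_refl subsetD)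
    qed
  qed (simp add: o_def insert_commute)
  also have "\<dots> = (\<Sum>B'\<in>Pow {Suc j..<b}. - (c * real (j-a) powr (2*H-2)) * ((-1) ^ card B' * c ^ card B' * Lcirc H ({j,b} \<union> B')))"
  proof (rule sum.cong[OF refl])
    fix B assume B: "B \<in> Pow {Suc j..<b}"
    have fin: "finite B" using B by (meson finite_atLeastLessThan finite_subset PowD)
    have jB: "j \<notin> B" using B by auto
    have e: "{a,b} \<union> insert j B = insert a ({j,b} \<union> B)" by auto
    have m: "Min ({j,b} \<union> B) = j"
      by (rule Min_eqI) (use B assms fin in auto)
    have "Lcirc H ({a,b} \<union> insert j B) = real (j-a) powr (2*H-2) * Lcirc H ({j,b} \<union> B)"
      unfolding e using B assms fin by (subst Lcirc_insert_min) (auto simp only: m, force)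
    then show "(-1) ^ card (insert j B) * c ^ card (insert j B) * Lcirc H ({a,b} \<union> insert j B) =
         - (c * real (j-a) powr (2*H-2)) * ((-1) ^ card B * c ^ card B * Lcirc H ({j,b} \<union> B))"
      using fin jB by simp
  qed
  also have "\<dots> = - (c * real (j-a) powr (2*H-2)) * Dcirc H c {j,b} {Suc j..<b}"
    by (simp add: Dcirc_def sum_distrib_left)
  finally show ?thesis by (simp add: Dcirc_def)
qed

lemma Dcirc_expand:
  assumes "a < j" "j \<le> b"
  shows "Dcirc H c {a,b} {j..<b} = real (b-a) powr (2*H-2) - c * (\<Sum>i\<in>{j..<b}. real (i-a) powr (2*H-2) * Dcirc H c {i,b} {Suc i..<b})"
  using assms
proof (induction "b - j" arbitrary: j)
  case 0
  then have "j = b" by simp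
  then show ?case using 0 by (simp add: Dcirc_def Lcirc_pair)
next
  case (Suc k)
  then have jb: "j < b" by simp
  have IH: "Dcirc H c {a,b} {Suc j..<b} = real (b-a) powr (2*H-2) - c * (\<Sum>i\<in>{Suc j..<b}. real (i-a) powr (2*H-2) * Dcirc H c {i,b} {Suc i..<b})"
    using Suc by auto
  have "{j..<b} = insert j {Suc j..<b}" using jb by auto
  then show ?case using Dcirc_step[OF Suc.prems(1) jb, of H c] IH
    by (simp add: algebra_simps)
qed

definition DD :: "real \<Rightarrow> real \<Rightarrow> nat \<Rightarrow> nat \<Rightarrow> real" where
  "DD H c a b = Dcirc H c {a,b} {Suc a..<b}"

lemma DD_rec:
  assumes "a < b"
  shows "DD H c a b = real (b-a) powr (2*H-2) - c * (\<Sum>i\<in>{1..<b-a}. real i powr (2*H-2) * DD H c (a+i) b)"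
proof -
  have "DD H c a b = real (b-a) powr (2*H-2) - c * (\<Sum>i\<in>{Suc a..<b}. real (i-a) powr (2*H-2) * DD H c i b)"
    unfolding DD_def using assms by (subst Dcirc_expand) auto
  also have "(\<Sum>i\<in>{Suc a..<b}. real (i-a) powr (2*H-2) * DD H c i b) = (\<Sum>i\<in>{1..<b-a}. real i powr (2*H-2) * DD H c (a+i) b)"
  proof -
    have "{Suc a..<b} = (\<lambda>i. a + i) ` {1..<b-a}" using assms
      by (auto simp: image_iff intro!: exI[where x="_ - a"])
    then have "(\<Sum>i\<in>{Suc a..<b}. real (i-a) powr (2*H-2) * DD H c i b) = (\<Sum>i\<in>{1..<b-a}. real ((a+i)-a) powr (2*H-2) * DD H c (a+i) b)"
      by (simp only: sum.reindex[OF inj_on_add[of a]] o_def)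
    then show ?thesis by simp
  qed
  finally show ?thesis .
qed

lemma DD_shift: "DD H c a (a+n) = DD H c a' (a'+n)"
proof (induction n arbitrary: a a' rule: less_induct)
  case (less n)
  show ?case
  proof (cases "n = 0")
    case True then show ?thesis by (simp add: DD_def Dcirc_def Lcirc_single)
  next
    case False
    have "(\<Sum>i\<in>{1..<n}. real i powr (2*H-2) * DD H c (a+i) (a+n)) = (\<Sum>i\<in>{1..<n}. real i powr (2*H-2) * DD H c (a'+i) (a'+n))"
    proof (rule sum.cong[OF refl])
      fix i assume "i \<in> {1..<n}"
      then have "DD H c (a+i) ((a+i)+(n-i)) = DD H c (a'+i) ((a'+i)+(n-i))" by (intro less.IH) auto
      moreover have "(a+i)+(n-i) = a+n" "(a'+i)+(n-i) = a'+n" using \<open>i \<in> {1..<n}\<close> by auto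
      ultimately show "real i powr (2*H-2) * DD H c (a+i) (a+n) = real i powr (2*H-2) * DD H c (a'+i) (a'+n)" by simp
    qed
    then show ?thesis using False DD_rec[of a "a+n" H c] DD_rec[of a' "a'+n" H c] by simp
  qed
qed


locale setting =
  fixes H c :: real and T :: "nat pmf"
  assumes H1: "1/2 < H" and H2: "H < 1" and c0: "0 < c"
    and natval: "pmf T 0 = 0"
    and T1: "pmf T 1 = c * Lcirc H {1, 2}"
    and Tk: "\<And>k. k \<ge> 2 \<Longrightarrow> pmf T k = c * Dcirc H c {1, k + 1} {2..k}"
begin

definition u :: "nat \<Rightarrow> real" where
  "u n = (if n = 0 then 1 else c * real n powr (2*H-2))"

definition f :: "nat \<Rightarrow> real" where "f n = pmf T n"

lemma f_DD: "k \<ge> 1 \<Longrightarrow> f k = c * DD H c 1 (k+1)"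
proof (cases "k = 1")
  case True
  then show ?thesis using T1 by (simp add: f_def DD_def Dcirc_def numeral_2_eq_2)
next
  case False
  assume "k \<ge> 1"
  with False have "k \<ge> 2" by simp
  moreover have "{2..k} = {Suc 1..<k+1}" by auto
  ultimately show ?thesis using Tk[of k] by (simp add: f_def DD_def)
qed

lemma renewal: "k \<ge> 1 \<Longrightarrow> f k = u k - (\<Sum>i\<in>{1..<k}. u i * f (k-i))"
proof -
  assume k: "k \<ge> 1"
  have "f k = c * (real k powr (2*H-2) - c * (\<Sum>i\<in>{1..<k}. real i powr (2*H-2) * DD H c (1+i) (k+1)))"
    using f_DD[OF k] DD_rec[of 1 "k+1" H c] k by simp
  also have "(\<Sum>i\<in>{1..<k}. real i powr (2*H-2) * DD H c (1+i) (k+1)) = (\<Sum>i\<in>{1..<k}. real i powr (2*H-2) * DD H c 1 (1 + (k - i)))"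
  proof (rule sum.cong[OF refl])
    fix i assume i: "i \<in> {1..<k}"
    have "DD H c (1+i) ((1+i) + (k-i)) = DD H c 1 (1 + (k-i))" by (rule DD_shift)
    moreover have "(1+i) + (k-i) = k+1" using i by auto
    ultimately show "real i powr (2*H-2) * DD H c (1+i) (k+1) = real i powr (2*H-2) * DD H c 1 (1 + (k - i))" by simp
  qed
  also have "c * (real k powr (2*H-2) - c * (\<Sum>i\<in>{1..<k}. real i powr (2*H-2) * DD H c 1 (1 + (k - i))))
     = u k - (\<Sum>i\<in>{1..<k}. u i * f (k-i))"
  proof -
    have "(\<Sum>i\<in>{1..<k}. u i * f (k-i)) = (\<Sum>i\<in>{1..<k}. c * (c * (real i powr (2*H-2) * DD H c 1 (1 + (k - i)))))"
      by (rule sum.cong[OF refl]) (auto simp: u_def f_DD)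
    then show ?thesis using k by (simp add: u_def sum_distrib_left algebra_simps)
  qed
  finally show ?thesis .
qed

definition r :: "nat \<Rightarrow> real" where "r n = measure_pmf.prob T {k. k > n}"

lemma r_eq: "r n = 1 - (\<Sum>k\<le>n. f k)"
proof -
  have "measure_pmf.prob T {k. k > n} = 1 - measure_pmf.prob T {..n}"
  proof -
    have "{k. k > n} = UNIV - {..n}" by auto
    then show ?thesis using measure_pmf.prob_compl[of "{..n}" T] by simp
  qed
  moreover have "measure_pmf.prob T {..n} = (\<Sum>k\<le>n. f k)"
    by (simp add: f_def measure_measure_pmf_finite)
  ultimately show ?thesis by (simp add: r_def)
qed

lemma f_nonneg: "f k \<ge> 0" by (simp add: f_def)
lemma r_nonneg: "r n \<ge> 0" by (simp add: r_def)
lemma r_le1: "r n \<le> 1" by (simp add: r_def)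
lemma r_mono: "m \<le> n \<Longrightarrow> r n \<le> r m"
  unfolding r_def by (rule measure_pmf.finite_measure_mono) auto

lemma u_nonneg: "u n \<ge> 0" using c0 by (simp add: u_def)

lemma fps_UF: "Abs_fps u * (1 - Abs_fps f) = 1"
proof (rule fps_ext)
  fix n
  show "fps_nth (Abs_fps u * (1 - Abs_fps f)) n = fps_nth (1::real fps) n"
  proof (cases "n = 0")
    case True then show ?thesis by (simp add: fps_mult_nth u_def f_def natval)
  next
    case False
    have "fps_nth (Abs_fps u * (1 - Abs_fps f)) n = (\<Sum>i=0..n. u i * ((if n - i = 0 then 1 else 0) - f (n-i)))"
      by (simp add: fps_mult_nth fps_one_nth)
    also have "\<dots> = u n - (\<Sum>i=0..n. u i * f (n-i))"
      by (simp add: algebra_simps sum_subtractf if_distrib[of "\<lambda>x. u _ * x"] sum.delta' cong: if_cong)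
    also have "(\<Sum>i=0..n. u i * f (n-i)) = u 0 * f n + (\<Sum>i\<in>{1..<n}. u i * f (n-i)) + u n * f 0"
    proof -
      have "{0..n} = insert 0 (insert n {1..<n})" using False by auto
      then show ?thesis using False by (simp add: algebra_simps)
    qed
    also have "\<dots> = u n" using renewal[of n] False by (simp add: u_def f_def natval)
    finally show ?thesis using False by simp
  qed
qed

lemma fps_R: "Abs_fps r = (1 - Abs_fps f) * Abs_fps (\<lambda>_. 1)"
proof (rule fps_ext)
  fix n
  have "fps_nth ((1 - Abs_fps f) * Abs_fps (\<lambda>_. 1)) n = (\<Sum>i=0..n. ((if i = 0 then 1 else 0) - f i))"
    by (simp add: fps_mult_nth fps_one_nth sum.atLeast0_atMost_Suc_shift)
  also have "\<dots> = 1 - (\<Sum>i\<le>n. f i)"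
    by (simp add: sum_subtractf atLeast0AtMost)
  finally show "fps_nth (Abs_fps r) n = fps_nth ((1 - Abs_fps f) * Abs_fps (\<lambda>_. 1)) n" by (simp add: r_eq)
qed

lemma fps_RU: "Abs_fps r * Abs_fps u = Abs_fps (\<lambda>_. 1::real)"
proof -
  have "Abs_fps r * Abs_fps u = (Abs_fps u * (1 - Abs_fps f)) * Abs_fps (\<lambda>_. 1)"
    unfolding fps_R by (simp only: ac_simps)
  then show ?thesis by (simp add: fps_UF)
qed

lemma conv_ru: "(\<Sum>j\<le>n. r j * u (n-j)) = 1"
proof -
  note fps_RU
  then have "fps_nth (Abs_fps r * Abs_fps u) n = 1" by simp
  then show ?thesis by (simp add: fps_mult_nth atLeast0AtMost)
qed

lemma conv_rw:
  fixes v :: "nat \<Rightarrow> real"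
  shows "(\<Sum>j\<le>n. r j * (\<Sum>i\<le>n-j. u i * v (n-j-i))) = (\<Sum>k\<le>n. v k)"
proof -
  have "Abs_fps r * (Abs_fps u * Abs_fps v) = Abs_fps (\<lambda>_. 1::real) * Abs_fps v"
    by (simp only: mult.assoc[symmetric] fps_RU)
  then have "fps_nth (Abs_fps r * (Abs_fps u * Abs_fps v)) n = fps_nth (Abs_fps (\<lambda>_. 1::real) * Abs_fps v) n"
    by (rule arg_cong[where f="\<lambda>F. fps_nth F n"])
  moreover have "(\<Sum>i\<le>n. v (n - i)) = (\<Sum>k\<le>n. v k)"
    using sum.atLeastAtMost_rev[of v 0 n] by (simp add: atLeast0AtMost)
  ultimately show ?thesis by (simp add: fps_mult_nth atLeast0AtMost)
qed

end


lemma powr_diff_bounds: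
  fixes x y p :: real
  assumes "0 < x" "x < y" "0 < p" "p < 1"
  shows "p * (y - x) * y powr (p-1) \<le> y powr p - x powr p"
    and "y powr p - x powr p \<le> p * (y - x) * x powr (p-1)"
proof -
  obtain z where z: "x < z" "z < y" "y powr p - x powr p = (y - x) * (p * z powr (p-1))"
  proof -
    have "\<exists>z>x. z < y \<and> y powr p - x powr p = (y - x) * (p * z powr (p - 1))"
      by (rule MVT2[OF assms(2), of "\<lambda>t. t powr p" "\<lambda>t. p * t powr (p-1)"])
        (use assms in \<open>auto intro!: has_real_derivative_powr\<close>)
    then show ?thesis using that by blast
  qed
  have "z powr (p-1) \<ge> y powr (p-1)" using z assms by (intro powr_mono2') auto
  moreover have "z powr (p-1) \<le> x powr (p-1)" using z assms by (intro powr_mono2') auto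
  moreover have d: "0 \<le> p * (y - x)" using assms by auto
  moreover have e: "y powr p - x powr p = p * (y - x) * z powr (p-1)" using z(3) by (simp add: algebra_simps)
  ultimately show "p * (y - x) * y powr (p-1) \<le> y powr p - x powr p"
    and "y powr p - x powr p \<le> p * (y - x) * x powr (p-1)"
    by (simp_all add: mult_left_mono)
qed

lemma sum_powr_upper:
  fixes p :: real assumes "0 < p" "p < 1"
  shows "(\<Sum>k=1..n. real k powr (p-1)) \<le> real n powr p / p"
proof (induction n)
  case 0 then show ?case by simp
next
  case (Suc n)
  show ?case
  proof (cases "n = 0")
    case True then show ?thesis using assms by simp
  next
    case False
    have "p * (real (Suc n) - real n) * real (Suc n) powr (p-1) \<le> real (Suc n) powr p - real n powr p"
      using False assms by (intro powr_diff_bounds(1)) auto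
    then have "real (Suc n) powr (p-1) \<le> (real (Suc n) powr p - real n powr p) / p"
      using assms by (simp add: field_simps)
    then show ?thesis using Suc.IH assms by (simp add: diff_divide_distrib)
  qed
qed

lemma sum_powr_lower:
  fixes p :: real assumes "0 < p" "p < 1"
  shows "(real (Suc n) powr p - 1) / p \<le> (\<Sum>k=1..n. real k powr (p-1))"
proof (induction n)
  case 0 then show ?case by simp
next
  case (Suc n)
  have "real (Suc (Suc n)) powr p - real (Suc n) powr p \<le> p * (real (Suc (Suc n)) - real (Suc n)) * real (Suc n) powr (p-1)"
    using assms by (intro powr_diff_bounds(2)) auto
  then have "(real (Suc (Suc n)) powr p - real (Suc n) powr p) / p \<le> real (Suc n) powr (p-1)"
    using assms by (simp add: field_simps)
  then show ?case using Suc.IH assms by (simp add: diff_divide_distrib)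
qed

lemma sum_powr_asymp:
  fixes p :: real assumes "0 < p" "p < 1"
  shows "(\<lambda>n. (\<Sum>k=1..n. real k powr (p-1)) / real n powr p) \<longlonglongrightarrow> 1 / p"
proof (rule tendsto_sandwich[where f="\<lambda>n. ((real (Suc n) / real n) powr p - 1 / real n powr p) / p" and h="\<lambda>_. 1/p"])
  show "\<forall>\<^sub>F n in sequentially. ((real (Suc n) / real n) powr p - 1 / real n powr p) / p \<le> (\<Sum>k=1..n. real k powr (p-1)) / real n powr p"
    using eventually_gt_at_top[of 0]
  proof eventually_elim
    case (elim n)
    have "(real (Suc n) powr p - 1) / p / real n powr p \<le> (\<Sum>k=1..n. real k powr (p-1)) / real n powr p"
      using sum_powr_lower[OF assms, of n] elim by (intro divide_right_mono) auto
    then show ?case using elim by (simp add: powr_divide field_simps)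
  qed
  show "\<forall>\<^sub>F n in sequentially. (\<Sum>k=1..n. real k powr (p-1)) / real n powr p \<le> 1/p"
    using eventually_gt_at_top[of 0]
  proof eventually_elim
    case (elim n)
    have "(\<Sum>k=1..n. real k powr (p-1)) / real n powr p \<le> real n powr p / p / real n powr p"
      using sum_powr_upper[OF assms, of n] elim by (intro divide_right_mono) auto
    then show ?case using elim by simp
  qed
  show "(\<lambda>_. 1/p) \<longlonglongrightarrow> 1/p" by simp
  have a: "(\<lambda>n. real (Suc n) / real n) \<longlonglongrightarrow> 1"
    using LIMSEQ_Suc_n_over_n by simp
  have b: "(\<lambda>n. 1 / real n powr p) \<longlonglongrightarrow> 0"
  proof -
    have "(\<lambda>n. real n powr (-p)) \<longlonglongrightarrow> 0"
      by (rule tendsto_neg_powr) (use assms filterlim_real_sequentially in auto)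
    then show ?thesis by (simp add: powr_minus divide_inverse)
  qed
  have "(\<lambda>n. ((real (Suc n) / real n) powr p - 1 / real n powr p) / p) \<longlonglongrightarrow> ((1 powr p) - 0) / p"
    using assms by (intro tendsto_intros a b) auto
  then show "(\<lambda>n. ((real (Suc n) / real n) powr p - 1 / real n powr p) / p) \<longlonglongrightarrow> 1 / p" by simp
qed


lemma riemann_conv:
  fixes a b :: real
  assumes a: "0 < a" and b: "0 < b" and ab: "a + b = 1"
  shows "convergent (\<lambda>m::nat. \<Sum>i\<in>{1..<m}. real i powr (a-1) * real (m-i) powr (b-1))"
proof -
  define g where "g x = x powr (a-1) * (1-x) powr (b-1)" for x :: real
  define s where "s m x = (\<Sum>i\<in>{1..<m}. g (real i / real m) * indicator {(real i - 1)/real m<..real i/real m} x)" for m :: nat and x :: real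
  define F where "F x = indicator {0<..<1::real} x * g x" for x
  define W where "W x = 2 powr (1-b) * (indicator {0..1::real} x * g x)" for x
  have g_nonneg: "g x \<ge> 0" for x by (simp add: g_def)
  have intW: "integrable lborel W"
  proof -
    have "set_integrable lborel {0..1} g"
      using integrable_Beta[OF a b] unfolding g_def[abs_def] .
    then have "integrable lborel (\<lambda>x. indicator {0..1::real} x * g x)"
      by (simp add: set_integrable_def)
    then show ?thesis unfolding W_def by (rule integrable_mult_right)
  qed
  have meas_s: "s m \<in> borel_measurable lborel" for m
    unfolding s_def by measurable
  have meas_F: "F \<in> borel_measurable lborel"
  proof -
    have "W \<in> borel_measurable lborel" using intW by (rule borel_measurable_integrable)
    then have "(\<lambda>x. W x * indicator {0<..<1::real} x / 2 powr (1-b)) \<in> borel_measurable lborel"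
      by measurable
    also have "(\<lambda>x. W x * indicator {0<..<1::real} x / 2 powr (1-b)) = F"
      by (auto simp: W_def F_def fun_eq_iff indicator_def)
    finally show ?thesis .
  qed
  have int_s: "integral\<^sup>L lborel (s m) = (\<Sum>i\<in>{1..<m}. real i powr (a-1) * real (m-i) powr (b-1))" for m
  proof -
    have "integral\<^sup>L lborel (s m) = (\<Sum>i\<in>{1..<m}. integral\<^sup>L lborel (\<lambda>x. g (real i / real m) * indicator {(real i - 1)/real m<..real i/real m} x))"
      unfolding s_def
    proof (rule Bochner_Integration.integral_sum[where f="\<lambda>i x. g (real i / real m) * indicator {(real i - 1)/real m<..real i/real m} x"])
      fix i assume "i \<in> {1..<m}"
      have le: "(real i - 1)/real m \<le> real i/real m" by (simp add: divide_right_mono)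
      have "integrable lborel (indicator {(real i - 1)/real m<..real i/real m} :: real \<Rightarrow> real)"
        by (rule integrable_real_indicator) (use le in auto)
      then show "integrable lborel (\<lambda>x. g (real i / real m) * indicator {(real i - 1)/real m<..real i/real m} x)"
        by (rule integrable_mult_right)
    qed
    also have "\<dots> = (\<Sum>i\<in>{1..<m}. real i powr (a-1) * real (m-i) powr (b-1))"
    proof (rule sum.cong[OF refl])
      fix i assume i: "i \<in> {1..<m}"
      then have m: "real m > 0" by auto
      have le: "(real i - 1)/real m \<le> real i/real m" using m by (simp add: divide_right_mono)
      have e1: "integral\<^sup>L lborel (\<lambda>x. g (real i / real m) * indicator {(real i - 1)/real m<..real i/real m} x)
          = g (real i / real m) / real m"
        using le m by (simp add: field_simps)
      have "g (real i / real m) = (real i / real m) powr (a-1) * (real (m-i) / real m) powr (b-1)"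
        using i m by (simp add: g_def of_nat_diff field_simps)
      also have "\<dots> = real i powr (a-1) * real (m-i) powr (b-1) / (real m powr (a-1) * real m powr (b-1))"
        by (simp add: powr_divide)
      also have "real m powr (a-1) * real m powr (b-1) = real m powr (a + b - 2)"
        by (simp add: powr_add[symmetric])
      finally have e2: "g (real i / real m) = real i powr (a-1) * real (m-i) powr (b-1) / real m powr (a + b - 2)" .
      have e3: "real m powr (a + b - 2) * real m = 1"
        using m ab by (simp add: powr_add[symmetric] powr_diff)
      show "integral\<^sup>L lborel (\<lambda>x. g (real i / real m) * indicator {(real i - 1)/real m<..real i/real m} x)
          = real i powr (a-1) * real (m-i) powr (b-1)"
        unfolding e1 e2 using e3 m by (simp add: field_simps)
    qed
    finally show ?thesis .
  qed
  have s_eval: "s m x = (if 0 < x \<and> nat \<lceil>real m * x\<rceil> \<in> {1..<m} then g (real (nat \<lceil>real m * x\<rceil>) / real m) else 0)"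
    if m: "m \<ge> 1" for m x
  proof -
    have ind: "indicator {(real i - 1)/real m<..real i/real m} x = (if 0 < x \<and> i = nat \<lceil>real m * x\<rceil> then 1 else (0::real))"
      if i: "i \<ge> 1" for i
    proof -
      have mpos: "real m > 0" using m by simp
      have iff1: "x \<in> {(real i - 1)/real m<..real i/real m} \<longleftrightarrow> real i - 1 < real m * x \<and> real m * x \<le> real i"
        using mpos by (auto simp: field_simps)
      also have "\<dots> \<longleftrightarrow> 0 < x \<and> i = nat \<lceil>real m * x\<rceil>"
      proof
        assume h: "real i - 1 < real m * x \<and> real m * x \<le> real i"
        then have "real m * x > 0" using i by simp
        then have "x > 0" using mpos by (simp add: zero_less_mult_iff)
        moreover have "\<lceil>real m * x\<rceil> = int i" using h by (simp add: ceiling_eq_iff)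
        ultimately show "0 < x \<and> i = nat \<lceil>real m * x\<rceil>" by simp
      next
        assume h: "0 < x \<and> i = nat \<lceil>real m * x\<rceil>"
        then have "\<lceil>real m * x\<rceil> > 0" using mpos by simp
        then have "\<lceil>real m * x\<rceil> = int i" using h by simp
        then show "real i - 1 < real m * x \<and> real m * x \<le> real i" by (simp add: ceiling_eq_iff)
      qed
      finally show ?thesis by (simp add: indicator_def)
    qed
    have "s m x = (\<Sum>i\<in>{1..<m}. g (real i / real m) * (if 0 < x \<and> i = nat \<lceil>real m * x\<rceil> then 1 else 0))"
      unfolding s_def by (rule sum.cong) (auto simp: ind)
    also have "\<dots> = (\<Sum>i\<in>{1..<m}. if i = nat \<lceil>real m * x\<rceil> then (if 0 < x then g (real i / real m) else 0) else 0)"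
      by (rule sum.cong) auto
    also have "\<dots> = (if 0 < x \<and> nat \<lceil>real m * x\<rceil> \<in> {1..<m} then g (real (nat \<lceil>real m * x\<rceil>) / real m) else 0)"
      by (subst sum.delta) auto
    finally show ?thesis .
  qed
  have s0: "s 0 x = 0" for x by (simp add: s_def)
  have bound: "norm (s m x) \<le> W x" for m x
  proof (cases "m \<ge> 1 \<and> 0 < x \<and> nat \<lceil>real m * x\<rceil> \<in> {1..<m}")
    case False
    then have "s m x = 0" using s_eval[of m x] s0 by (cases "m = 0") auto
    then show ?thesis by (simp add: W_def g_nonneg)
  next
    case True
    define k where "k = nat \<lceil>real m * x\<rceil>"
    have m: "m \<ge> 1" and x: "0 < x" and k: "k \<in> {1..<m}" using True by (auto simp: k_def)
    have mpos: "real m > 0" using m by simp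
    have kc: "real k = real_of_int \<lceil>real m * x\<rceil>" using x mpos by (simp add: k_def)
    have t1: "x \<le> real k / real m" using kc mpos by (simp add: field_simps)
    have t2: "real k / real m < x + 1 / real m" using kc mpos ceiling_correct[of "real m * x"] by (simp add: field_simps)
    have t3: "real k / real m \<le> 1 - 1 / real m" using k mpos by (simp add: field_simps)
    have x1: "x < 1"
    proof -
      have "1 / real m > 0" using mpos by simp
      then show ?thesis using t1 t3 by linarith
    qed
    have h1: "(real k / real m) powr (a-1) \<le> x powr (a-1)" using x t1 a ab b by (intro powr_mono2') auto
    have hh: "(1 - x) / 2 \<le> 1 - real k / real m" using t2 t3 by simp
    have h2: "(1 - real k / real m) powr (b-1) \<le> ((1 - x)/2) powr (b-1)"
      using hh x1 a ab b by (intro powr_mono2') auto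
    have h3: "((1 - x)/2) powr (b-1) = 2 powr (1-b) * (1-x) powr (b-1)"
    proof -
      have e1: "((1 - x)/2) powr (b-1) = (1-x) powr (b-1) / 2 powr (b-1)" using x1 by (simp add: powr_divide)
      have e2: "2 powr (1-b) = 1 / 2 powr (b-1)" using powr_minus_divide[of 2 "b-1"] by simp
      show ?thesis unfolding e1 e2 by simp
    qed
    have "s m x = g (real k / real m)" using s_eval[OF m, of x] True by (simp add: k_def)
    also have "\<dots> \<le> x powr (a-1) * (2 powr (1-b) * (1-x) powr (b-1))"
      unfolding g_def using h1 h2[unfolded h3] by (intro mult_mono) auto
    also have "\<dots> = W x" using x x1 by (simp add: W_def g_def indicator_def)
    finally show ?thesis using g_nonneg \<open>s m x = g (real k / real m)\<close> by simp
  qed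
  have lim: "(\<lambda>m. s m x) \<longlonglongrightarrow> F x" for x
  proof (cases "0 < x \<and> x < 1")
    case False
    have "s m x = 0" for m
    proof (cases "m \<ge> 1")
      case True
      have nc: "\<not> (0 < x \<and> nat \<lceil>real m * x\<rceil> \<in> {1..<m})"
      proof
        assume h: "0 < x \<and> nat \<lceil>real m * x\<rceil> \<in> {1..<m}"
        then have "x \<ge> 1" using False by simp
        then have "real m * x \<ge> real m" using True by simp
        then have "real_of_int (int m) \<le> of_int \<lceil>real m * x\<rceil>" using le_of_int_ceiling[of "real m * x"] by (simp only: of_int_of_nat_eq)
        then have "\<lceil>real m * x\<rceil> \<ge> int m" by (simp only: of_int_le_iff)
        then show False using h by auto
      qed
      show ?thesis using s_eval[OF True, of x] nc by (simp only: if_False)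
    qed (use s0 in \<open>simp add: not_le\<close>)
    then show ?thesis using False by (auto simp: F_def indicator_def)
  next
    case True
    then have x: "0 < x" "x < 1" by auto
    define t where "t m = real (nat \<lceil>real m * x\<rceil>) / real m" for m :: nat
    have ev: "\<forall>\<^sub>F m in sequentially. s m x = g (t m)"
    proof -
      obtain M :: nat where M: "real M > 1 / (1 - x)" using reals_Archimedean2 by blast
      have "s m x = g (t m)" if "m \<ge> M + 1" for m
      proof -
        have m: "m \<ge> 1" using that by simp
        have mpos: "real m > 0" using m by simp
        have "real m \<ge> real M" using that by simp
        then have "real m > 1 / (1 - x)" using M by linarith
        then have "real m * (1 - x) > 1" using x by (simp add: field_simps)
        then have "real m * x \<le> real m - 1" by (simp add: algebra_simps)
        then have "real m * x \<le> of_int (int m - 1)" by simp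
        then have "\<lceil>real m * x\<rceil> \<le> int m - 1" by (rule ceiling_le)
        moreover have "\<lceil>real m * x\<rceil> \<ge> 1" using x mpos by (simp add: zero_less_mult_iff)
        ultimately have "int (nat \<lceil>real m * x\<rceil>) \<ge> 1" "int (nat \<lceil>real m * x\<rceil>) < int m" by linarith+
        then have "nat \<lceil>real m * x\<rceil> \<in> {1..<m}" by (simp only: atLeastLessThan_iff) presburger
        then show ?thesis using s_eval[OF m, of x] x by (simp add: t_def)
      qed
      then show ?thesis by (auto simp: eventually_sequentially)
    qed
    have tlim: "t \<longlonglongrightarrow> x"
    proof (rule tendsto_sandwich[where f="\<lambda>_. x" and h="\<lambda>m. x + 1 / real m"])
      show "\<forall>\<^sub>F m in sequentially. x \<le> t m"
        using eventually_gt_at_top[of 0]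
      proof eventually_elim
        case (elim m)
        then have "real (nat \<lceil>real m * x\<rceil>) \<ge> real m * x" using x by simp
        then show ?case using elim by (simp add: t_def field_simps)
      qed
      show "\<forall>\<^sub>F m in sequentially. t m \<le> x + 1 / real m"
        using eventually_gt_at_top[of 0]
      proof eventually_elim
        case (elim m)
        then have mx: "real m * x > 0" using x by simp
        then have "real (nat \<lceil>real m * x\<rceil>) = of_int \<lceil>real m * x\<rceil>" by simp
        then have "real (nat \<lceil>real m * x\<rceil>) \<le> real m * x + 1"
          using ceiling_correct[of "real m * x"] by linarith
        then show ?case using elim by (simp add: t_def field_simps)
      qed
      show "(\<lambda>_. x) \<longlonglongrightarrow> x" by simp
      have "(\<lambda>m. x + 1 / real m) \<longlonglongrightarrow> x + 0"
        by (intro tendsto_intros lim_1_over_n)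
      then show "(\<lambda>m. x + 1 / real m) \<longlonglongrightarrow> x" by simp
    qed
    have "(\<lambda>m. g (t m)) \<longlonglongrightarrow> g x"
      unfolding g_def using x by (intro tendsto_intros tlim) auto
    then have "(\<lambda>m. s m x) \<longlonglongrightarrow> g x"
      using ev by (subst tendsto_cong) auto
    then show ?thesis using x by (simp add: F_def)
  qed
  have "(\<lambda>m. integral\<^sup>L lborel (s m)) \<longlonglongrightarrow> integral\<^sup>L lborel F"
    by (rule integral_dominated_convergence[OF meas_F meas_s intW]) (auto intro!: AE_I2 lim bound[unfolded real_norm_def])
  then show ?thesis unfolding int_s convergent_def by blast
qed


context setting
begin

definition al :: real where "al = 2*H - 1"
definition be :: real where "be = 2 - 2*H"

lemma al_pos: "0 < al" and al_lt1: "al < 1" and be_pos: "0 < be" and be_lt1: "be < 1"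
  and al_be: "al + be = 1"
  using H1 H2 by (auto simp: al_def be_def)

definition v :: "nat \<Rightarrow> real" where "v k = (if k = 0 then 0 else real k powr (be - 1))"
definition w :: "nat \<Rightarrow> real" where "w m = (\<Sum>i\<le>m. u i * v (m-i))"
definition S :: "nat \<Rightarrow> real" where "S m = (\<Sum>i\<in>{1..<m}. real i powr (al-1) * real (m-i) powr (be-1))"
definition V :: "nat \<Rightarrow> real" where "V n = (\<Sum>k\<le>n. v k)"
definition R :: "nat \<Rightarrow> real" where "R n = (\<Sum>j\<le>n. r j)"

lemma v_nonneg: "v k \<ge> 0" by (simp add: v_def)
lemma w_nonneg: "w m \<ge> 0" unfolding w_def by (intro sum_nonneg mult_nonneg_nonneg u_nonneg v_nonneg)

lemma w_eq: "m \<ge> 1 \<Longrightarrow> w m = v m + c * S m"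
proof -
  assume m: "m \<ge> 1"
  have "{..m} = insert 0 (insert m {1..<m})" using m by auto
  then have "w m = u 0 * v m + (u m * v 0 + (\<Sum>i\<in>{1..<m}. u i * v (m-i)))"
    unfolding w_def using m by (simp add: sum.insert)
  also have "(\<Sum>i\<in>{1..<m}. u i * v (m-i)) = c * S m"
    unfolding S_def sum_distrib_left
    by (rule sum.cong) (auto simp: u_def v_def al_def)
  finally show ?thesis by (simp add: u_def v_def)
qed

lemma S_conv: "convergent S"
  unfolding S_def[abs_def] using riemann_conv[OF al_pos be_pos al_be] .

definition SL :: real where "SL = lim S"

lemma S_lim: "S \<longlonglongrightarrow> SL"
  using S_conv by (simp add: SL_def convergent_LIMSEQ_iff)

lemma S_lower: "m \<ge> 2 \<Longrightarrow> S m \<ge> 1/2"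
proof -
  assume m: "m \<ge> 2"
  have "S m \<ge> (\<Sum>i\<in>{1..<m}. real m powr (al-1) * real m powr (be-1))"
    unfolding S_def
  proof (rule sum_mono)
    fix i assume i: "i \<in> {1..<m}"
    have "real m powr (al-1) \<le> real i powr (al-1)" using i al_lt1 by (intro powr_mono2') auto
    moreover have "real m powr (be-1) \<le> real (m-i) powr (be-1)" using i be_lt1 by (intro powr_mono2') auto
    ultimately show "real m powr (al-1) * real m powr (be-1) \<le> real i powr (al-1) * real (m-i) powr (be-1)"
      by (intro mult_mono) auto
  qed
  also have "real m powr (al-1) * real m powr (be-1) = 1 / real m"
    using m al_be by (simp add: powr_add[symmetric] powr_minus_divide[symmetric])
  finally have "S m \<ge> (real m - 1) / real m" using m by (simp add: of_nat_diff)
  moreover have "(real m - 1) / real m \<ge> 1/2" using m by (simp add: field_simps)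
  ultimately show ?thesis by linarith
qed

lemma SL_ge: "SL \<ge> 1/2"
  using S_lim by (rule LIMSEQ_le_const) (use S_lower in \<open>auto intro!: exI[of _ 2]\<close>)

definition C0 :: real where "C0 = c * SL"

lemma C0_pos: "C0 > 0" using SL_ge c0 by (simp add: C0_def)

lemma v_lim: "v \<longlonglongrightarrow> 0"
proof -
  have "(\<lambda>k. real k powr (be - 1)) \<longlonglongrightarrow> 0"
    by (rule tendsto_neg_powr) (use be_lt1 filterlim_real_sequentially in auto)
  then show ?thesis
    by (rule Lim_transform_eventually) (auto simp: v_def eventually_sequentially intro!: exI[of _ 1])
qed

lemma w_lim: "w \<longlonglongrightarrow> C0"
proof -
  have "(\<lambda>m. v m + c * S m) \<longlonglongrightarrow> 0 + c * SL"
    by (intro tendsto_intros v_lim S_lim)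
  then have "(\<lambda>m. v m + c * S m) \<longlonglongrightarrow> C0" by (simp add: C0_def)
  then show ?thesis
    by (rule Lim_transform_eventually) (auto simp: w_eq eventually_sequentially intro!: exI[of _ 1])
qed

lemma V_eq: "V n = (\<Sum>k=1..n. real k powr (be-1))"
proof -
  have "V n = (\<Sum>k\<in>{0..n}. v k)" by (simp add: V_def atLeast0AtMost)
  also have "\<dots> = v 0 + (\<Sum>k=1..n. v k)"
    by (simp add: sum.atLeast_Suc_atMost)
  also have "\<dots> = (\<Sum>k=1..n. real k powr (be-1))" by (simp add: v_def)
  finally show ?thesis .
qed

lemma V_asymp: "(\<lambda>n. V n / real n powr be) \<longlonglongrightarrow> 1 / be"
  unfolding V_eq using sum_powr_asymp[OF be_pos be_lt1] .

lemma V_conv: "V n = (\<Sum>j\<le>n. r j * w (n-j))"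
  unfolding V_def w_def using conv_rw[where n=n and v=v] by (simp add: diff_diff_left)

lemma r0: "r 0 = 1"
  using r_eq[of 0] natval by (simp add: f_def)

lemma R_ge1: "R n \<ge> 1"
proof -
  have "R n \<ge> r 0" unfolding R_def by (rule member_le_sum) (auto simp: r_nonneg)
  then show ?thesis by (simp add: r0)
qed

lemma R_mono: "m \<le> n \<Longrightarrow> R m \<le> R n"
  unfolding R_def by (rule sum_mono2) (auto simp: r_nonneg)

lemma npowr_to_inf: "filterlim (\<lambda>n. real n powr be) at_top sequentially"
proof -
  have "(\<lambda>n. real n powr (-be)) \<longlonglongrightarrow> 0"
    by (rule tendsto_neg_powr) (use be_pos filterlim_real_sequentially in auto)
  moreover have "eventually (\<lambda>n. 0 < real n powr (-be)) sequentially"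
    by (auto simp: eventually_sequentially intro!: exI[of _ 1])
  ultimately have "filterlim (\<lambda>n. inverse (real n powr (-be))) at_top sequentially"
    by (rule filterlim_inverse_at_top)
  then show ?thesis by (simp add: powr_minus)
qed

lemma V_to_inf: "filterlim V at_top sequentially"
proof -
  have "filterlim (\<lambda>n. V n / real n powr be * real n powr be) at_top sequentially"
    by (rule filterlim_tendsto_pos_mult_at_top[OF V_asymp _ npowr_to_inf]) (use be_pos in simp)
  then show ?thesis
    by (rule filterlim_at_top_mono) (auto simp: eventually_sequentially intro!: exI[of _ 1])
qed

lemma w_bounded_ex: "\<exists>Bw>0. \<forall>m. w m \<le> Bw"
proof -
  have "Bseq w" using w_lim by (intro convergent_imp_Bseq) (auto simp: convergent_def)
  then obtain K where K: "K > 0" "\<And>m. norm (w m) \<le> K" unfolding Bseq_def by blast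
  have "w m \<le> K" for m using K(2)[of m] by (simp add: abs_le_iff)
  then show ?thesis using K(1) by blast
qed

lemma R_to_inf: "filterlim R at_top sequentially"
proof -
  obtain Bw where Bw: "Bw > 0" "\<And>m. w m \<le> Bw" using w_bounded_ex by blast
  have le: "V n / Bw \<le> R n" for n
  proof -
    have "V n \<le> (\<Sum>j\<le>n. r j * Bw)" unfolding V_conv
      by (rule sum_mono) (auto intro!: mult_left_mono Bw r_nonneg)
    also have "\<dots> = Bw * R n" by (simp add: R_def sum_distrib_left mult.commute)
    finally show ?thesis using Bw by (simp add: field_simps)
  qed
  have "filterlim (\<lambda>n. 1 / Bw * V n) at_top sequentially"
    by (rule filterlim_tendsto_pos_mult_at_top[OF tendsto_const _ V_to_inf]) (use Bw in simp)
  then show ?thesis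
    by (rule filterlim_at_top_mono) (use le in \<open>auto simp: field_simps\<close>)
qed

lemma VR_lim: "(\<lambda>n. V n / R n) \<longlonglongrightarrow> C0"
proof (rule tendstoI)
  fix e :: real assume e: "e > 0"
  obtain Bw where Bw: "Bw > 0" "\<And>m. w m \<le> Bw" using w_bounded_ex by blast
  define B2 where "B2 = Bw + C0"
  have B2: "\<bar>w m - C0\<bar> \<le> B2" for m using Bw(2)[of m] w_nonneg[of m] C0_pos by (simp add: B2_def abs_le_iff)
  have "eventually (\<lambda>m. dist (w m) C0 < e/2) sequentially"
    using w_lim e by (intro tendstoD) auto
  then obtain M where M: "\<And>m. m \<ge> M \<Longrightarrow> \<bar>w m - C0\<bar> < e/2"
    by (auto simp: eventually_sequentially dist_real_def)
  have key: "\<bar>V n - C0 * R n\<bar> \<le> e/2 * R n + real M * B2" for n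
  proof -
    have c1: "C0 * R n = (\<Sum>j\<le>n. r j * C0)" by (simp add: R_def sum_distrib_left mult.commute)
    have "V n - C0 * R n = (\<Sum>j\<le>n. r j * w (n-j) - r j * C0)"
      unfolding c1 V_conv by (simp only: sum_subtractf)
    also have "\<dots> = (\<Sum>j\<le>n. r j * (w (n-j) - C0))" by (simp only: right_diff_distrib)
    finally have "V n - C0 * R n = (\<Sum>j\<le>n. r j * (w (n-j) - C0))" .
    then have "\<bar>V n - C0 * R n\<bar> \<le> (\<Sum>j\<le>n. \<bar>r j * (w (n-j) - C0)\<bar>)"
      by (simp add: sum_abs)
    also have "\<dots> \<le> (\<Sum>j\<le>n. e/2 * r j + (if n - j < M then B2 else 0))"
    proof (rule sum_mono)
      fix j assume "j \<in> {..n}"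
      show "\<bar>r j * (w (n-j) - C0)\<bar> \<le> e/2 * r j + (if n - j < M then B2 else 0)"
      proof (cases "n - j < M")
        case True
        have "\<bar>r j * (w (n-j) - C0)\<bar> = r j * \<bar>w (n-j) - C0\<bar>" by (simp add: abs_mult r_nonneg)
        also have "\<dots> \<le> 1 * B2" using B2[of "n-j"] r_le1[of j] r_nonneg[of j]
          by (intro mult_mono) auto
        finally have h1: "\<bar>r j * (w (n-j) - C0)\<bar> \<le> B2" by simp
        have h2: "0 \<le> e/2 * r j" using e r_nonneg[of j] by simp
        have h3: "(if n - j < M then B2 else 0) = B2" using True by simp
        show ?thesis unfolding h3 using h1 h2 by linarith
      next
        case False
        have "\<bar>r j * (w (n-j) - C0)\<bar> = r j * \<bar>w (n-j) - C0\<bar>" by (simp add: abs_mult r_nonneg)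
        also have "\<dots> \<le> r j * (e/2)" using M[of "n-j"] False r_nonneg[of j]
          by (intro mult_left_mono) auto
        finally show ?thesis using False by (simp add: mult.commute)
      qed
    qed
    also have "\<dots> = e/2 * R n + (\<Sum>j\<le>n. (if n - j < M then B2 else 0))"
      by (simp add: sum.distrib R_def sum_distrib_left)
    also have "(\<Sum>j\<le>n. (if n - j < M then B2 else 0)) = real (card {j\<in>{..n}. n - j < M}) * B2"
    proof -
      have "(\<Sum>j\<le>n. (if n - j < M then B2 else 0)) = (\<Sum>j\<in>{j\<in>{..n}. n - j < M}. B2)"
        by (rule sum.inter_filter[symmetric]) simp
      then show ?thesis by simp
    qed
    also have "real (card {j\<in>{..n}. n - j < M}) \<le> real M"
    proof -
      have "card {j\<in>{..n}. n - j < M} \<le> card {..<M}"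
        by (rule card_inj_on_le[where f="\<lambda>j. n - j"]) (auto simp: inj_on_def)
      then show ?thesis by simp
    qed
    then have "real (card {j\<in>{..n}. n - j < M}) * B2 \<le> real M * B2"
      using B2[of 0] by (intro mult_right_mono) auto
    finally show ?thesis by simp
  qed
  have "eventually (\<lambda>n. R n > 2 * real M * B2 / e) sequentially"
    using R_to_inf by (simp add: filterlim_at_top_dense)
  then show "eventually (\<lambda>n. dist (V n / R n) C0 < e) sequentially"
  proof eventually_elim
    case (elim n)
    have Rp: "R n > 0" using R_ge1[of n] by simp
    have q: "V n / R n - C0 = (V n - C0 * R n) / R n" using Rp by (simp add: diff_divide_distrib)
    have "dist (V n / R n) C0 = \<bar>V n - C0 * R n\<bar> / R n"
      unfolding dist_real_def q using Rp by simp
    also have "\<dots> \<le> (e/2 * R n + real M * B2) / R n"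
      using key[of n] Rp by (intro divide_right_mono) auto
    also have "\<dots> = e/2 + real M * B2 / R n" using Rp by (simp add: field_simps)
    also have "real M * B2 / R n < e/2"
      using elim Rp e by (simp add: field_simps)
    finally show ?case by simp
  qed
qed

lemma div_div_cancel_aux: "(a::real) \<noteq> 0 \<Longrightarrow> b \<noteq> 0 \<Longrightarrow> (a / x) / (a / b) = b / x"
  by (simp add: field_simps)

definition A :: real where "A = 1 / (be * C0)"

lemma A_pos: "A > 0" using be_pos C0_pos by (simp add: A_def)

lemma R_asymp: "(\<lambda>n. R n / real n powr be) \<longlonglongrightarrow> A"
proof -
  have "(\<lambda>n. (V n / real n powr be) / (V n / R n)) \<longlonglongrightarrow> (1/be) / C0"
    by (rule tendsto_divide[OF V_asymp VR_lim]) (use C0_pos in simp)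
  moreover have "eventually (\<lambda>n. (V n / real n powr be) / (V n / R n) = R n / real n powr be) sequentially"
  proof -
    have "V n > 0" if "n \<ge> 1" for n
    proof -
      have "V n \<ge> v 1" unfolding V_def using that by (intro member_le_sum) (auto simp: v_nonneg)
      then show ?thesis by (simp add: v_def)
    qed
    have "(V n / real n powr be) / (V n / R n) = R n / real n powr be" if "n \<ge> 1" for n
    proof -
      have "V n \<noteq> 0" using \<open>\<And>n. n \<ge> 1 \<Longrightarrow> V n > 0\<close>[OF that] by simp
      moreover have "R n \<noteq> 0" using R_ge1[of n] by simp
      ultimately show ?thesis by (rule div_div_cancel_aux)
    qed
    then show ?thesis by (intro eventually_sequentiallyI[of 1])
  qed
  ultimately have "(\<lambda>n. R n / real n powr be) \<longlonglongrightarrow> (1/be) / C0"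
    by (rule Lim_transform_eventually)
  then show ?thesis by (simp add: A_def)
qed

end


context setting
begin

definition rho :: "nat \<Rightarrow> real" where "rho n = R n / real n powr be"

lemma rho_lim: "rho \<longlonglongrightarrow> A"
  using R_asymp unfolding rho_def[abs_def] .

lemma R_diff: "n \<le> N \<Longrightarrow> R N - R n = (\<Sum>j\<in>{n<..N}. r j)"
proof -
  assume "n \<le> N"
  then have "{..N} = {..n} \<union> {n<..N}" by auto
  moreover have "{..n} \<inter> {n<..N} = {}" by auto
  ultimately have "R N = R n + (\<Sum>j\<in>{n<..N}. r j)"
    unfolding R_def by (simp add: sum.union_disjoint)
  then show ?thesis by simp
qed

lemma npowr_al: "n \<ge> 1 \<Longrightarrow> real n powr al = real n / real n powr be"
proof -
  assume "n \<ge> 1"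
  have "al = 1 - be" using al_be by simp
  then show ?thesis using \<open>n \<ge> 1\<close> by (simp add: powr_diff)
qed

lemma alg_id:
  fixes n N :: nat and d :: real
  assumes "n \<ge> 1" "N \<ge> 1"
  shows "real n powr al * (X - Y) / d = (real n / d) * (X / real N powr be * (real N / real n) powr be - Y / real n powr be)"
proof -
  have p1: "real n powr be > 0" "real N powr be > 0" using assms by auto
  have "(real N / real n) powr be = real N powr be / real n powr be" by (simp add: powr_divide)
  then show ?thesis using p1 assms by (simp add: npowr_al field_simps)
qed

lemma lower_step:
  assumes n: "n \<ge> 1" and d: "d \<ge> 1"
  shows "real n powr al * r n \<ge> (real n / real d) * (rho (n+d) * (real (n+d) / real n) powr be - rho n)"
proof -
  have "R (n+d) - R n = (\<Sum>j\<in>{n<..n+d}. r j)" by (rule R_diff) simp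
  also have "\<dots> \<le> real (card {n<..n+d}) * r n"
    by (rule sum_bounded_above) (auto intro: r_mono)
  finally have "(R (n+d) - R n) / real d \<le> r n" using d by (simp add: field_simps)
  then have le: "real n powr al * ((R (n+d) - R n) / real d) \<le> real n powr al * r n"
    by (intro mult_left_mono) auto
  have eq: "real n powr al * ((R (n+d) - R n) / real d) = (real n / real d) * (rho (n+d) * (real (n+d) / real n) powr be - rho n)"
    using alg_id[of n "n+d" "R (n+d)" "R n" "real d"] n by (simp add: rho_def)
  show ?thesis using le eq by linarith
qed

lemma upper_step:
  assumes n: "n \<ge> 1" and d: "d \<ge> 1" and dn: "d < n"
  shows "real n powr al * r n \<le> (real n / real d) * (rho n - rho (n-d) * (real (n-d) / real n) powr be)"
proof -
  have "real (card {n-d<..n}) * r n \<le> (\<Sum>j\<in>{n-d<..n}. r j)"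
    by (rule sum_bounded_below) (auto intro: r_mono)
  also have "\<dots> = R n - R (n-d)" by (rule R_diff[symmetric]) simp
  finally have "r n \<le> (R n - R (n-d)) / real d" using d dn by (simp add: field_simps)
  then have le: "real n powr al * r n \<le> real n powr al * ((R n - R (n-d)) / real d)"
    by (intro mult_left_mono) auto
  have eq: "real n powr al * ((R n - R (n-d)) / real d) = (real n / real d) * (rho n - rho (n-d) * (real (n-d) / real n) powr be)"
  proof -
    have "real n powr al * ((R n - R (n-d)) / real d) = - (real n powr al * (R (n-d) - R n) / real d)"
      by (simp add: right_diff_distrib diff_divide_distrib)
    also have "\<dots> = - ((real n / real d) * (R (n-d) / real (n-d) powr be * (real (n-d) / real n) powr be - R n / real n powr be))"
      using alg_id[of n "n-d" "R (n-d)" "R n" "real d"] n dn by simp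
    finally show ?thesis by (simp add: rho_def algebra_simps)
  qed
  show ?thesis using le eq by linarith
qed

lemma div_frac_lim:
  assumes p: "p \<ge> 1"
  shows "(\<lambda>n. real (n div p) / real n) \<longlonglongrightarrow> 1 / real p"
proof (rule tendsto_sandwich[where f="\<lambda>n. 1 / real p - 1 / real n" and h="\<lambda>_. 1 / real p"])
  show "\<forall>\<^sub>F n in sequentially. 1 / real p - 1 / real n \<le> real (n div p) / real n"
  proof (rule eventually_sequentiallyI[of 1])
    fix n :: nat assume n: "1 \<le> n"
    have "real n = real p * real (n div p) + real (n mod p)"
      by (metis of_nat_add of_nat_mult div_mult_mod_eq mult.commute)
    moreover have "real (n mod p) < real p" using p by simp
    ultimately have "real n < real p * (real (n div p) + 1)" by (simp add: algebra_simps)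
    then have "real n / real p < real (n div p) + 1" using p by (simp add: field_simps)
    then have "(real n / real p - 1) / real n \<le> real (n div p) / real n"
      by (intro divide_right_mono) auto
    moreover have "(real n / real p - 1) / real n = 1 / real p - 1 / real n" using n p by (simp add: field_simps)
    ultimately show "1 / real p - 1 / real n \<le> real (n div p) / real n" by linarith
  qed
  show "\<forall>\<^sub>F n in sequentially. real (n div p) / real n \<le> 1 / real p"
  proof (rule eventually_sequentiallyI[of 1])
    fix n :: nat assume n: "1 \<le> n"
    have "real (n div p) * real p \<le> real n"
      by (metis of_nat_le_iff of_nat_mult div_times_less_eq_dividend)
    then show "real (n div p) / real n \<le> 1 / real p" using n p by (simp add: field_simps)
  qed
  show "(\<lambda>_. 1 / real p) \<longlonglongrightarrow> 1 / real p" by simp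
  have "(\<lambda>n. 1 / real p - 1 / real n) \<longlonglongrightarrow> 1 / real p - 0"
    by (intro tendsto_intros lim_1_over_n)
  then show "(\<lambda>n. 1 / real p - 1 / real n) \<longlonglongrightarrow> 1 / real p" by simp
qed

definition K :: real where "K = be * A"

lemma K_pos: "K > 0" using be_pos A_pos by (simp add: K_def)

lemma lo_bound:
  assumes p: "p \<ge> (2::nat)"
  shows "real p * (A * (1 + 1 / real p) powr be - A) \<ge> K - K / (real p + 1)"
proof -
  have pp: "real p \<ge> 2" using p by simp
  have y: "(1::real) < 1 + 1 / real p" using pp by simp
  have "be * ((1 + 1 / real p) - 1) * (1 + 1 / real p) powr (be - 1) \<le> (1 + 1 / real p) powr be - 1 powr be"
    by (rule powr_diff_bounds(1)[OF _ y be_pos be_lt1]) simp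
  then have h1: "be * (1 / real p) * (1 + 1 / real p) powr (be - 1) \<le> (1 + 1 / real p) powr be - 1" by simp
  have "(1 + 1 / real p) powr (-1) \<le> (1 + 1 / real p) powr (be - 1)"
    by (rule powr_mono) (use be_pos pp in auto)
  moreover have "(1 + 1 / real p) powr (-1) = real p / (real p + 1)"
    using pp by (simp add: powr_minus field_simps)
  ultimately have h2: "real p / (real p + 1) \<le> (1 + 1 / real p) powr (be - 1)" by simp
  have "be * (1 / real p) * (real p / (real p + 1)) \<le> be * (1 / real p) * (1 + 1 / real p) powr (be - 1)"
    using h2 be_pos pp by (intro mult_left_mono) auto
  with h1 have h3: "be * (1 / real p) * (real p / (real p + 1)) \<le> (1 + 1 / real p) powr be - 1" by linarith
  have "real p * A * (be * (1 / real p) * (real p / (real p + 1))) \<le> real p * A * ((1 + 1 / real p) powr be - 1)"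
    using h3 A_pos pp by (intro mult_left_mono) auto
  moreover have "real p * A * (be * (1 / real p) * (real p / (real p + 1))) = K - K / (real p + 1)"
    using pp by (simp add: K_def field_simps)
  moreover have "real p * A * ((1 + 1 / real p) powr be - 1) = real p * (A * (1 + 1 / real p) powr be - A)"
    by (simp add: algebra_simps)
  ultimately show ?thesis by linarith
qed

lemma hi_bound:
  assumes p: "p \<ge> (2::nat)"
  shows "real p * (A - A * (1 - 1 / real p) powr be) \<le> K + K / (real p - 1)"
proof -
  have pp: "real p \<ge> 2" using p by simp
  have x0: "0 < 1 - 1 / real p" using pp by (simp add: field_simps)
  have x1: "1 - 1 / real p < 1" using pp by simp
  have "1 powr be - (1 - 1 / real p) powr be \<le> be * (1 - (1 - 1 / real p)) * (1 - 1 / real p) powr (be - 1)"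
    by (rule powr_diff_bounds(2)[OF x0 x1 be_pos be_lt1])
  then have h1: "1 - (1 - 1 / real p) powr be \<le> be * (1 / real p) * (1 - 1 / real p) powr (be - 1)" by simp
  have "(1 - 1 / real p) powr (be - 1) \<le> (1 - 1 / real p) powr (-1)"
    by (rule powr_mono') (use be_pos x0 x1 in auto)
  moreover have "(1 - 1 / real p) powr (-1) = real p / (real p - 1)"
    using pp x0 by (simp add: powr_minus field_simps)
  ultimately have h2: "(1 - 1 / real p) powr (be - 1) \<le> real p / (real p - 1)" by simp
  have "be * (1 / real p) * (1 - 1 / real p) powr (be - 1) \<le> be * (1 / real p) * (real p / (real p - 1))"
    using h2 be_pos pp by (intro mult_left_mono) auto
  with h1 have h3: "1 - (1 - 1 / real p) powr be \<le> be * (1 / real p) * (real p / (real p - 1))" by linarith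
  have "real p * A * (1 - (1 - 1 / real p) powr be) \<le> real p * A * (be * (1 / real p) * (real p / (real p - 1)))"
    using h3 A_pos pp by (intro mult_left_mono) auto
  moreover have "real p * A * (be * (1 / real p) * (real p / (real p - 1))) = K + K / (real p - 1)"
    using pp by (simp add: K_def field_simps)
  moreover have "real p * A * (1 - (1 - 1 / real p) powr be) = real p * (A - A * (1 - 1 / real p) powr be)"
    by (simp add: algebra_simps)
  ultimately show ?thesis by linarith
qed

lemma lim_lower:
  assumes p: "p \<ge> (2::nat)"
  shows "(\<lambda>n. (real n / real (n div p)) * (rho (n + n div p) * (real (n + n div p) / real n) powr be - rho n))
     \<longlonglongrightarrow> real p * (A * (1 + 1 / real p) powr be - A)"
proof -
  have dl: "(\<lambda>n. real (n div p) / real n) \<longlonglongrightarrow> 1 / real p" using p by (intro div_frac_lim) auto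
  have "(\<lambda>n. 1 / (real (n div p) / real n)) \<longlonglongrightarrow> 1 / (1 / real p)"
    by (rule tendsto_divide[OF tendsto_const dl]) (use p in auto)
  then have l1: "(\<lambda>n. real n / real (n div p)) \<longlonglongrightarrow> real p" by simp
  have "(\<lambda>n. 1 + real (n div p) / real n) \<longlonglongrightarrow> 1 + 1 / real p" by (intro tendsto_intros dl)
  then have l2: "(\<lambda>n. real (n + n div p) / real n) \<longlonglongrightarrow> 1 + 1 / real p"
    by (rule Lim_transform_eventually) (auto intro!: eventually_sequentiallyI[of 1] simp: field_simps)
  have f: "filterlim (\<lambda>n. n + n div p) sequentially sequentially"
    by (rule filterlim_at_top_mono[OF filterlim_ident]) auto
  have l3: "(\<lambda>n. rho (n + n div p)) \<longlonglongrightarrow> A" by (rule filterlim_compose[OF rho_lim f])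
  have "(\<lambda>n. (real n / real (n div p)) * (rho (n + n div p) * (real (n + n div p) / real n) powr be - rho n))
     \<longlonglongrightarrow> real p * (A * (1 + 1 / real p) powr be - A)"
    by (intro tendsto_intros l1 l2 l3 rho_lim) (use p be_pos in auto)
  then show ?thesis .
qed

lemma lim_upper:
  assumes p: "p \<ge> (2::nat)"
  shows "(\<lambda>n. (real n / real (n div p)) * (rho n - rho (n - n div p) * (real (n - n div p) / real n) powr be))
     \<longlonglongrightarrow> real p * (A - A * (1 - 1 / real p) powr be)"
proof -
  have dl: "(\<lambda>n. real (n div p) / real n) \<longlonglongrightarrow> 1 / real p" using p by (intro div_frac_lim) auto
  have "(\<lambda>n. 1 / (real (n div p) / real n)) \<longlonglongrightarrow> 1 / (1 / real p)"
    by (rule tendsto_divide[OF tendsto_const dl]) (use p in auto)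
  then have l1: "(\<lambda>n. real n / real (n div p)) \<longlonglongrightarrow> real p" by simp
  have "(\<lambda>n. 1 - real (n div p) / real n) \<longlonglongrightarrow> 1 - 1 / real p" by (intro tendsto_intros dl)
  then have l2: "(\<lambda>n. real (n - n div p) / real n) \<longlonglongrightarrow> 1 - 1 / real p"
    by (rule Lim_transform_eventually) (auto intro!: eventually_sequentiallyI[of 1] simp: field_simps of_nat_diff)
  have f: "filterlim (\<lambda>n. n - n div p) sequentially sequentially"
    unfolding filterlim_at_top
  proof
    fix Z :: nat
    show "eventually (\<lambda>n. Z \<le> n - n div p) sequentially"
    proof (rule eventually_sequentiallyI[of "2 * Z"])
      fix n assume n: "2 * Z \<le> n"
      have "n div p \<le> n div 2" using p by (intro div_le_mono2) auto
      then show "Z \<le> n - n div p" using n by linarith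
    qed
  qed
  have l3: "(\<lambda>n. rho (n - n div p)) \<longlonglongrightarrow> A" by (rule filterlim_compose[OF rho_lim f])
  have "(\<lambda>n. (real n / real (n div p)) * (rho n - rho (n - n div p) * (real (n - n div p) / real n) powr be))
     \<longlonglongrightarrow> real p * (A - A * (1 - 1 / real p) powr be)"
    by (intro tendsto_intros l1 l2 l3 rho_lim) (use p in auto)
  then show ?thesis .
qed

lemma r_asymp: "(\<lambda>n. real n powr al * r n) \<longlonglongrightarrow> K"
proof (rule tendstoI)
  fix e :: real assume e: "e > 0"
  define p where "p = nat \<lceil>2 * K / e\<rceil> + 2"
  have p2: "p \<ge> 2" by (simp add: p_def)
  have pge: "real p \<ge> 2 * K / e + 2"
  proof -
    have "real (nat \<lceil>2 * K / e\<rceil>) \<ge> 2 * K / e" by linarith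
    then show ?thesis by (simp add: p_def)
  qed
  have kp1: "K / (real p - 1) < e / 2"
  proof -
    have "real p - 1 > 2 * K / e" using pge by linarith
    then have k: "K < e / 2 * (real p - 1)" using e by (simp add: field_simps)
    have "real p - 1 > 0" using pge e K_pos by (smt (verit) divide_nonneg_pos)
    then show ?thesis using k by (subst pos_divide_less_eq) auto
  qed
  have kp2: "K / (real p + 1) < e / 2"
  proof -
    have pp: "real p \<ge> 2" using p2 by simp
    have "K / (real p + 1) \<le> K / (real p - 1)"
      using K_pos pp by (intro divide_left_mono) auto
    then show ?thesis using kp1 by linarith
  qed
  define lo where "lo = real p * (A * (1 + 1 / real p) powr be - A)"
  define hi where "hi = real p * (A - A * (1 - 1 / real p) powr be)"
  have ev1: "eventually (\<lambda>n. lo - e/2 < (real n / real (n div p)) * (rho (n + n div p) * (real (n + n div p) / real n) powr be - rho n)) sequentially"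
    using lim_lower[OF p2] e unfolding lo_def by (intro order_tendstoD(1)) auto
  have ev2: "eventually (\<lambda>n. (real n / real (n div p)) * (rho n - rho (n - n div p) * (real (n - n div p) / real n) powr be) < hi + e/2) sequentially"
    using lim_upper[OF p2] e unfolding hi_def by (intro order_tendstoD(2)) auto
  have ev3: "eventually (\<lambda>n. n \<ge> p) sequentially" by (rule eventually_ge_at_top)
  show "eventually (\<lambda>n. dist (real n powr al * r n) K < e) sequentially"
    using ev1 ev2 ev3
  proof eventually_elim
    case (elim n)
    have n1: "n \<ge> 1" using elim p2 by simp
    have "0 < n div p" using elim p2 by (simp add: div_greater_zero_iff)
    then have d1: "n div p \<ge> 1" by simp
    have dn: "n div p < n" using n1 p2 by (intro div_less_dividend) auto
    have a: "real n powr al * r n \<ge> (real n / real (n div p)) * (rho (n + n div p) * (real (n + n div p) / real n) powr be - rho n)"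
      by (rule lower_step[OF n1 d1])
    have b: "real n powr al * r n \<le> (real n / real (n div p)) * (rho n - rho (n - n div p) * (real (n - n div p) / real n) powr be)"
      by (rule upper_step[OF n1 d1 dn])
    have lob: "lo \<ge> K - K / (real p + 1)" unfolding lo_def by (rule lo_bound[OF p2])
    have hib: "hi \<le> K + K / (real p - 1)" unfolding hi_def by (rule hi_bound[OF p2])
    show ?case unfolding dist_real_def abs_less_iff using a b elim(1,2) kp1 kp2 lob hib by linarith
  qed
qed

end


context setting
begin

lemma r_pos: "r n > 0"
proof -
  have "eventually (\<lambda>m. K/2 < real m powr al * r m) sequentially"
    using r_asymp K_pos by (intro order_tendstoD(1)) auto
  moreover have "eventually (\<lambda>m. m \<ge> 1) sequentially" by (rule eventually_ge_at_top)
  ultimately have "eventually (\<lambda>m. r m > 0) sequentially"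
  proof eventually_elim
    case (elim m)
    then have "real m powr al * r m > 0" using K_pos by linarith
    then show ?case using elim by (simp add: zero_less_mult_iff)
  qed
  then obtain N where N: "\<And>m. m \<ge> N \<Longrightarrow> r m > 0" by (auto simp: eventually_sequentially)
  have "r (max n N) \<le> r n" by (rule r_mono) simp
  moreover have "r (max n N) > 0" by (rule N) simp
  ultimately show ?thesis by simp
qed

lemma ET_inf: "(\<integral>\<^sup>+ k. ennreal (real k) \<partial>measure_pmf T) = \<infinity>"
proof -
  have ge: "ennreal (R n) \<le> (\<integral>\<^sup>+ k. ennreal (real k) \<partial>measure_pmf T)" for n
  proof -
    have "ennreal (R n) = (\<Sum>j\<le>n. ennreal (r j))"
      unfolding R_def by (rule sum_ennreal[symmetric]) (auto simp: r_nonneg)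
    also have "\<dots> = (\<Sum>j\<le>n. \<integral>\<^sup>+ k. indicator {k. j < k} k \<partial>measure_pmf T)"
      by (simp add: r_def measure_pmf.emeasure_eq_measure)
    also have "\<dots> = (\<integral>\<^sup>+ k. (\<Sum>j\<le>n. indicator {k. j < k} k) \<partial>measure_pmf T)"
      by (rule nn_integral_sum[symmetric]) simp
    also have "\<dots> \<le> (\<integral>\<^sup>+ k. ennreal (real k) \<partial>measure_pmf T)"
    proof (rule nn_integral_mono)
      fix k :: nat
      have "(\<Sum>j\<le>n. indicator {k. j < k} k :: ennreal) = (\<Sum>j\<le>n. if j < k then 1 else 0)"
        by (intro sum.cong) (auto simp: indicator_def)
      also have "\<dots> = (\<Sum>j\<in>{j\<in>{..n}. j < k}. 1)"
        by (rule sum.inter_filter[symmetric]) simp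
      also have "\<dots> = of_nat (card {j\<in>{..n}. j < k})" by simp
      also have "card {j\<in>{..n}. j < k} \<le> k"
      proof -
        have "card {j\<in>{..n}. j < k} \<le> card {..<k}" by (rule card_mono) auto
        then show ?thesis by simp
      qed
      then have "(of_nat (card {j\<in>{..n}. j < k}) :: ennreal) \<le> of_nat k" by simp
      finally show "(\<Sum>j\<le>n. indicator {k. j < k} k :: ennreal) \<le> ennreal (real k)"
        by (simp add: ennreal_of_nat_eq_real_of_nat)
    qed
    finally show ?thesis .
  qed
  show ?thesis
  proof (rule ccontr)
    assume ne: "(\<integral>\<^sup>+ k. ennreal (real k) \<partial>measure_pmf T) \<noteq> \<infinity>"
    then obtain y where y: "(\<integral>\<^sup>+ k. ennreal (real k) \<partial>measure_pmf T) = ennreal y" "y \<ge> 0"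
      by (cases "(\<integral>\<^sup>+ k. ennreal (real k) \<partial>measure_pmf T)" rule: ennreal_cases) auto
    have "eventually (\<lambda>n. R n > y) sequentially"
      using R_to_inf by (simp add: filterlim_at_top_dense)
    then obtain n where "R n > y" by (auto simp: eventually_sequentially)
    moreover have "ennreal (R n) \<le> ennreal y" using ge[of n] y by simp
    then have "R n \<le> y" using y(2) by (simp add: ennreal_le_iff)
    ultimately show False by simp
  qed
qed

definition L2 :: "real \<Rightarrow> real" where
  "L2 t = measure_pmf.prob T {k. real k > t} * \<bar>t\<bar> powr (2*H - 1)"

lemma prob_floor: "t \<ge> 0 \<Longrightarrow> measure_pmf.prob T {k. real k > t} = r (nat \<lfloor>t\<rfloor>)"
proof -
  assume t: "t \<ge> 0"
  have "{k. real k > t} = {k. k > nat \<lfloor>t\<rfloor>}"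
  proof (rule Collect_cong)
    fix k :: nat
    have "real k > t \<longleftrightarrow> \<lfloor>t\<rfloor> < int k" by (simp add: floor_less_iff)
    also have "\<dots> \<longleftrightarrow> nat \<lfloor>t\<rfloor> < k" using t by linarith
    finally show "(real k > t) = (k > nat \<lfloor>t\<rfloor>)" .
  qed
  then show ?thesis by (simp add: r_def)
qed

lemma L2_pos: "t > 0 \<Longrightarrow> L2 t > 0"
  using r_pos by (simp add: L2_def prob_floor)

lemma L2_meas: "L2 \<in> borel_measurable borel"
proof -
  have "mono (\<lambda>t. - measure_pmf.prob T {k. real k > t})"
  proof (rule monoI)
    fix s t :: real assume "s \<le> t"
    then have "measure_pmf.prob T {k. real k > t} \<le> measure_pmf.prob T {k. real k > s}"
      by (intro measure_pmf.finite_measure_mono) auto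
    then show "- measure_pmf.prob T {k. real k > s} \<le> - measure_pmf.prob T {k. real k > t}" by simp
  qed
  then have m1: "(\<lambda>t. - measure_pmf.prob T {k. real k > t}) \<in> borel_measurable borel"
    by (rule borel_measurable_mono)
  have m2: "(\<lambda>t. - (- measure_pmf.prob T {k. real k > t})) \<in> borel_measurable borel"
    using m1 by measurable
  have m3: "(\<lambda>t::real. \<bar>t\<bar> powr (2*H - 1)) \<in> borel_measurable borel" by measurable
  have "(\<lambda>t. - (- measure_pmf.prob T {k. real k > t}) * \<bar>t\<bar> powr (2*H - 1)) \<in> borel_measurable borel"
    using m2 m3 by (rule borel_measurable_times)
  then show ?thesis unfolding L2_def[abs_def] by simp
qed

lemma aux_cancel: "(a::real) > 0 \<Longrightarrow> a powr q * x * (y / a powr q) = x * y"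
  by simp

lemma L2_lim: "(L2 \<longlongrightarrow> K) at_top"
proof -
  have fl: "filterlim (\<lambda>t::real. nat \<lfloor>t\<rfloor>) sequentially at_top"
    by (rule filterlim_compose[OF filterlim_nat_sequentially filterlim_floor_sequentially])
  have a: "((\<lambda>t::real. real (nat \<lfloor>t\<rfloor>) powr al * r (nat \<lfloor>t\<rfloor>)) \<longlongrightarrow> K) at_top"
    using filterlim_compose[OF r_asymp fl] by (simp add: o_def)
  have inv: "((\<lambda>t::real. 1 / real (nat \<lfloor>t\<rfloor>)) \<longlongrightarrow> 0) at_top"
    using filterlim_compose[OF lim_1_over_n fl] by (simp add: o_def)
  have q: "((\<lambda>t::real. t / real (nat \<lfloor>t\<rfloor>)) \<longlongrightarrow> 1) at_top"
  proof (rule tendsto_sandwich[where f="\<lambda>_. 1" and h="\<lambda>t::real. 1 + 1 / real (nat \<lfloor>t\<rfloor>)"])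
    show "eventually (\<lambda>t::real. 1 \<le> t / real (nat \<lfloor>t\<rfloor>)) at_top"
      using eventually_ge_at_top[of "1::real"]
    proof eventually_elim
      case (elim t)
      have "real (nat \<lfloor>t\<rfloor>) = of_int \<lfloor>t\<rfloor>" using elim by simp
      moreover have "of_int \<lfloor>t\<rfloor> \<le> t" by (rule of_int_floor_le)
      moreover have "of_int \<lfloor>t\<rfloor> \<ge> (1::real)" using elim by (simp add: le_floor_iff)
      ultimately show ?case by (simp add: field_simps)
    qed
    show "eventually (\<lambda>t::real. t / real (nat \<lfloor>t\<rfloor>) \<le> 1 + 1 / real (nat \<lfloor>t\<rfloor>)) at_top"
      using eventually_ge_at_top[of "1::real"]
    proof eventually_elim
      case (elim t)
      have "real (nat \<lfloor>t\<rfloor>) = of_int \<lfloor>t\<rfloor>" using elim by simp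
      moreover have "t < of_int \<lfloor>t\<rfloor> + 1" by (rule real_of_int_floor_add_one_gt)
      moreover have "of_int \<lfloor>t\<rfloor> \<ge> (1::real)" using elim by (simp add: le_floor_iff)
      ultimately show ?case by (simp add: field_simps)
    qed
    show "((\<lambda>_. 1::real) \<longlongrightarrow> 1) at_top" by simp
    have "((\<lambda>t::real. 1 + 1 / real (nat \<lfloor>t\<rfloor>)) \<longlongrightarrow> 1 + 0) at_top" by (intro tendsto_intros inv)
    then show "((\<lambda>t::real. 1 + 1 / real (nat \<lfloor>t\<rfloor>)) \<longlongrightarrow> 1) at_top" by simp
  qed
  have "((\<lambda>t::real. real (nat \<lfloor>t\<rfloor>) powr al * r (nat \<lfloor>t\<rfloor>) * (t / real (nat \<lfloor>t\<rfloor>)) powr al) \<longlongrightarrow> K * 1 powr al) at_top"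
    by (intro tendsto_intros a q) simp
  then have b: "((\<lambda>t::real. real (nat \<lfloor>t\<rfloor>) powr al * r (nat \<lfloor>t\<rfloor>) * (t / real (nat \<lfloor>t\<rfloor>)) powr al) \<longlongrightarrow> K) at_top"
    by simp
  have ev: "eventually (\<lambda>t::real. real (nat \<lfloor>t\<rfloor>) powr al * r (nat \<lfloor>t\<rfloor>) * (t / real (nat \<lfloor>t\<rfloor>)) powr al = L2 t) at_top"
    using eventually_ge_at_top[of "1::real"]
  proof eventually_elim
    case (elim t)
    have "of_int \<lfloor>t\<rfloor> \<ge> (1::real)" using elim by (simp add: le_floor_iff)
    then have m: "real (nat \<lfloor>t\<rfloor>) > 0" and m': "real_of_int \<lfloor>t\<rfloor> > 0" by simp_all
    have "(t / real (nat \<lfloor>t\<rfloor>)) powr al = t powr al / real (nat \<lfloor>t\<rfloor>) powr al"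
      using elim m by (simp add: powr_divide)
    then have "real (nat \<lfloor>t\<rfloor>) powr al * r (nat \<lfloor>t\<rfloor>) * (t / real (nat \<lfloor>t\<rfloor>)) powr al = r (nat \<lfloor>t\<rfloor>) * t powr al"
      by (simp only: aux_cancel[OF m])
    also have "\<dots> = L2 t" using elim by (simp add: L2_def prob_floor al_def)
    finally show ?case .
  qed
  show ?thesis by (rule Lim_transform_eventually[OF b ev])
qed

lemma L2_sv: "slowly_varying L2"
  unfolding slowly_varying_def
proof (intro conjI allI impI)
  show "\<And>x. 0 < x \<Longrightarrow> 0 < L2 x" by (rule L2_pos)
  show "L2 \<in> borel_measurable borel" by (rule L2_meas)
  fix lam :: real assume lam: "lam > 0"
  have f: "filterlim (\<lambda>t. lam * t) at_top at_top"
    by (rule filterlim_tendsto_pos_mult_at_top[OF tendsto_const lam filterlim_ident])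
  have "((\<lambda>t. L2 (lam * t)) \<longlongrightarrow> K) at_top" using filterlim_compose[OF L2_lim f] by (simp add: o_def)
  then have "((\<lambda>t. L2 (lam * t) / L2 t) \<longlongrightarrow> K / K) at_top"
    by (rule tendsto_divide[OF _ L2_lim]) (use K_pos in simp)
  then show "((\<lambda>t. L2 (lam * t) / L2 t) \<longlongrightarrow> 1) at_top" using K_pos by simp
qed

lemma L2_eq: "t > 0 \<Longrightarrow> measure_pmf.prob T {k. real k > t} = t powr (1 - 2 * H) * L2 t"
proof -
  assume t: "t > 0"
  have "t powr (1 - 2 * H) * t powr (2 * H - 1) = 1"
    using t by (simp add: powr_add[symmetric])
  then show ?thesis using t by (simp add: L2_def)
qed

end

theorem theorem3p7:
  fixes H c :: real and T :: "nat pmf"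
  assumes H: "1/2 < H" "H < 1"
    and c: "0 < c" "c < 2 powr (2 * H - 2)"
    and natval: "pmf T 0 = 0"
    and T1: "pmf T 1 = c * Lcirc H {1, 2}"
    and Tk: "\<And>k. k \<ge> 2 \<Longrightarrow> pmf T k = c * Dcirc H c {1, k + 1} {2..k}"
  shows "(\<integral>\<^sup>+ k. ennreal (real k) \<partial>measure_pmf T) = \<infinity> \<and>
         (\<exists>L2. slowly_varying L2 \<and>
           (\<forall>t>0. measure_pmf.prob T {k. real k > t} = t powr (1 - 2 * H) * L2 t))"
proof -
  interpret setting H c T
    by unfold_locales (use assms in auto)
  show ?thesis using ET_inf L2_sv L2_eq by blast
qed


end
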